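(* Let $p(z)=z^n+a_nz^{n-1}+\cdots+a_2z+a_1$ be a complex monic polynomial with $n\geq2$ and $a_1\neq0$. If $z\in\mathbb{C}$ is any zero of $p$, then $$|z|\leq\left\{\frac{1}{2}\sqrt{\frac{\delta+1+\sqrt{(\delta-1)^2+4\delta'}}{2}}+\frac{1}{2}\left(\frac{1}{2}\left(\delta_1+\delta+\sqrt{(\delta_1-\delta)^2+4\delta_2}\right)+1\right)^{1/4}\right\}^{1/2}.$$
   Context: Let $C_p$ be the $n\times n$ matrix whose first row is $(-a_n,-a_{n-1},\dots,-a_2,-a_1)$, whose entries $(k+1,k)$ equal $1$ for $k=1,\dots,n-1$, and whose other entries are $0$. Define numbers $b_j,c_j,d_j$ ($j=1,\dots,n$) by: the first row of $C_p^2$ is $(b_n,b_{n-1},\dots,b_1)$, the first row of $C_p^3$ is $(c_n,\dots,c_1)$, the first row of $C_p^4$ is $(d_n,\dots,d_1)$ (so $b_j=a_na_j-a_{j-1}$, $c_j=-a_nb_j+a_{n-1}a_j-a_{j-2}$ with $a_0=a_{-1}=0$). Set $\alpha=\sum_{j=1}^n|a_j|^2$, $\beta=\sum_{j=1}^n|b_j|^2$, $\gamma=-\sum_{j=1}^n b_j\overline{a_j}$, $\delta=\frac{1}{2}\left(\alpha+\beta+\sqrt{(\alpha-\beta)^2+4|\gamma|^2}\right)$; $\alpha'=\sum_{j=3}^n|a_j|^2$, $\beta'=\sum_{j=3}^n|b_j|^2$, $\gamma'=-\sum_{j=3}^n\overline{a_j}b_j$, $\delta'=\frac12\left(\alpha'+\beta'+\sqrt{(\alpha'-\beta')^2+4|\gamma'|^2}\right)$;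 $\alpha_1=\sum_{j=1}^n|d_j|^2$, $\beta_1=\sum_{j=1}^n|c_j|^2$, $\gamma_1=\sum_{j=1}^n d_j\overline{c_j}$, $\delta_1=\frac12\left(\alpha_1+\beta_1+\sqrt{(\alpha_1-\beta_1)^2+4|\gamma_1|^2}\right)$; $\gamma_2=\sum_{j=1}^n d_j\overline{b_j}$, $\gamma_3=\sum_{j=1}^n d_j\overline{a_j}$, $\gamma_4=\sum_{j=1}^n c_j\overline{b_j}$, $\gamma_5=\sum_{j=1}^n c_j\overline{a_j}$, and $\delta_2=\frac12\Big(|\gamma_2|^2+|\gamma_3|^2+|\gamma_4|^2+|\gamma_5|^2+\sqrt{\big((|\gamma_2|^2+|\gamma_3|^2)-(|\gamma_4|^2+|\gamma_5|^2)\big)^2+4|\gamma_2\overline{\gamma_4}+\gamma_3\overline{\gamma_5}|^2}\Big)$. *)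

theory Defs
  imports Complex_Main "Jordan_Normal_Form.Matrix"
begin

text \<open>Coefficients: p(z) = z^n + a n z^(n-1) + ... + a 2 z + a 1, indexed a 1, ..., a n.
  Matrices are 0-indexed: entry (i,j) below is entry (i+1,j+1) of the paper.\<close>

definition companion :: "nat \<Rightarrow> (nat \<Rightarrow> complex) \<Rightarrow> complex mat" where
  "companion n a = mat n n (\<lambda>(i,j). if i = 0 then - a (n - j) else if i = j + 1 then 1 else 0)"

text \<open>Entry j (1 <= j <= n) of the first row of C_p^k, with first row written as (x_n, ..., x_1).\<close>
definition frow :: "nat \<Rightarrow> (nat \<Rightarrow> complex) \<Rightarrow> nat \<Rightarrow> nat \<Rightarrow> complex" where
  "frow n a k j = (companion n a ^\<^sub>m k) $$ (0, n - j)"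

definition bco :: "nat \<Rightarrow> (nat \<Rightarrow> complex) \<Rightarrow> nat \<Rightarrow> complex" where
  "bco n a j = frow n a 2 j"
definition cco :: "nat \<Rightarrow> (nat \<Rightarrow> complex) \<Rightarrow> nat \<Rightarrow> complex" where
  "cco n a j = frow n a 3 j"
definition dco :: "nat \<Rightarrow> (nat \<Rightarrow> complex) \<Rightarrow> nat \<Rightarrow> complex" where
  "dco n a j = frow n a 4 j"

definition alpha :: "nat \<Rightarrow> (nat \<Rightarrow> complex) \<Rightarrow> real" where
  "alpha n a = (\<Sum>j=1..n. (cmod (a j))^2)"
definition beta :: "nat \<Rightarrow> (nat \<Rightarrow> complex) \<Rightarrow> real" where
  "beta n a = (\<Sum>j=1..n. (cmod (bco n a j))^2)"
definition gamma :: "nat \<Rightarrow> (nat \<Rightarrow> complex) \<Rightarrow> complex" where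
  "gamma n a = - (\<Sum>j=1..n. bco n a j * cnj (a j))"
definition delta :: "nat \<Rightarrow> (nat \<Rightarrow> complex) \<Rightarrow> real" where
  "delta n a = (alpha n a + beta n a
     + sqrt ((alpha n a - beta n a)^2 + 4 * (cmod (gamma n a))^2)) / 2"

definition alpha' :: "nat \<Rightarrow> (nat \<Rightarrow> complex) \<Rightarrow> real" where
  "alpha' n a = (\<Sum>j=3..n. (cmod (a j))^2)"
definition beta' :: "nat \<Rightarrow> (nat \<Rightarrow> complex) \<Rightarrow> real" where
  "beta' n a = (\<Sum>j=3..n. (cmod (bco n a j))^2)"
definition gamma' :: "nat \<Rightarrow> (nat \<Rightarrow> complex) \<Rightarrow> complex" where
  "gamma' n a = - (\<Sum>j=3..n. cnj (a j) * bco n a j)"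
definition delta' :: "nat \<Rightarrow> (nat \<Rightarrow> complex) \<Rightarrow> real" where
  "delta' n a = (alpha' n a + beta' n a
     + sqrt ((alpha' n a - beta' n a)^2 + 4 * (cmod (gamma' n a))^2)) / 2"

definition alpha1 :: "nat \<Rightarrow> (nat \<Rightarrow> complex) \<Rightarrow> real" where
  "alpha1 n a = (\<Sum>j=1..n. (cmod (dco n a j))^2)"
definition beta1 :: "nat \<Rightarrow> (nat \<Rightarrow> complex) \<Rightarrow> real" where
  "beta1 n a = (\<Sum>j=1..n. (cmod (cco n a j))^2)"
definition gamma1 :: "nat \<Rightarrow> (nat \<Rightarrow> complex) \<Rightarrow> complex" where
  "gamma1 n a = (\<Sum>j=1..n. dco n a j * cnj (cco n a j))"
definition delta1 :: "nat \<Rightarrow> (nat \<Rightarrow> complex) \<Rightarrow> real" where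
  "delta1 n a = (alpha1 n a + beta1 n a
     + sqrt ((alpha1 n a - beta1 n a)^2 + 4 * (cmod (gamma1 n a))^2)) / 2"

definition gamma2 :: "nat \<Rightarrow> (nat \<Rightarrow> complex) \<Rightarrow> complex" where
  "gamma2 n a = (\<Sum>j=1..n. dco n a j * cnj (bco n a j))"
definition gamma3 :: "nat \<Rightarrow> (nat \<Rightarrow> complex) \<Rightarrow> complex" where
  "gamma3 n a = (\<Sum>j=1..n. dco n a j * cnj (a j))"
definition gamma4 :: "nat \<Rightarrow> (nat \<Rightarrow> complex) \<Rightarrow> complex" where
  "gamma4 n a = (\<Sum>j=1..n. cco n a j * cnj (bco n a j))"
definition gamma5 :: "nat \<Rightarrow> (nat \<Rightarrow> complex) \<Rightarrow> complex" where
  "gamma5 n a = (\<Sum>j=1..n. cco n a j * cnj (a j))"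

definition delta2 :: "nat \<Rightarrow> (nat \<Rightarrow> complex) \<Rightarrow> real" where
  "delta2 n a =
    (let g2 = gamma2 n a; g3 = gamma3 n a; g4 = gamma4 n a; g5 = gamma5 n a;
         s = (cmod g2)^2 + (cmod g3)^2; t = (cmod g4)^2 + (cmod g5)^2
     in (s + t + sqrt ((s - t)^2 + 4 * (cmod (g2 * cnj g4 + g3 * cnj g5))^2)) / 2)"

end

theory Submission
  imports Defs
begin


lemma real_CS:
  fixes f g :: "'i \<Rightarrow> real"
  shows "(\<Sum>i\<in>J. f i * g i)^2 \<le> (\<Sum>i\<in>J. (f i)^2) * (\<Sum>i\<in>J. (g i)^2)"
proof -
  define A where "A = (\<Sum>i\<in>J. (f i)^2)"
  define B where "B = (\<Sum>i\<in>J. f i * g i)"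
  define C where "C = (\<Sum>i\<in>J. (g i)^2)"
  have A0: "A \<ge> 0" unfolding A_def by (simp add: sum_nonneg)
  have "0 \<le> (\<Sum>i\<in>J. (B * f i - A * g i)^2)" by (simp add: sum_nonneg)
  also have "\<dots> = B^2 * (\<Sum>i\<in>J. (f i)^2) - 2 * A * B * (\<Sum>i\<in>J. f i * g i) + A^2 * (\<Sum>i\<in>J. (g i)^2)"
    by (simp add: power2_diff sum.distrib sum_subtractf sum_distrib_left power_mult_distrib
        algebra_simps)
  also have "\<dots> = B^2 * A - 2 * A * B * B + A^2 * C"
    unfolding A_def[symmetric] B_def[symmetric] C_def[symmetric] by simp
  finally have h: "0 \<le> A * (A * C - B^2)" by (simp add: algebra_simps power2_eq_square)
  show ?thesis
  proof (cases "A = 0")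
    case True
    show ?thesis
    proof (cases "finite J")
      case True
      with \<open>A = 0\<close> have "\<forall>i\<in>J. (f i)^2 = 0" unfolding A_def
        using sum_nonneg_eq_0_iff[of J "\<lambda>i. (f i)^2"] by auto
      then have "B = 0" unfolding B_def by simp
      then show ?thesis using A0 by (simp add: B_def[symmetric] A_def[symmetric] C_def[symmetric] \<open>A=0\<close>)
    next
      case False then show ?thesis by simp
    qed
  next
    case False
    then have "A > 0" using A0 by simp
    then have "A * C - B^2 \<ge> 0" using h by (simp add: zero_le_mult_iff)
    then show ?thesis by (simp add: A_def[symmetric] B_def[symmetric] C_def[symmetric])
  qed
qed

lemma complex_CS:
  fixes x y :: "'i \<Rightarrow> complex"
  shows "cmod (\<Sum>i\<in>J. x i * cnj (y i)) \<le> sqrt (\<Sum>i\<in>J. (cmod (x i))^2) * sqrt (\<Sum>i\<in>J. (cmod (y i))^2)"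
proof -
  have "cmod (\<Sum>i\<in>J. x i * cnj (y i)) \<le> (\<Sum>i\<in>J. cmod (x i) * cmod (y i))"
    by (rule order_trans[OF norm_sum]) (simp add: norm_mult)
  also have "\<dots> \<le> sqrt ((\<Sum>i\<in>J. (cmod (x i))^2) * (\<Sum>i\<in>J. (cmod (y i))^2))"
    by (rule real_le_rsqrt) (rule real_CS)
  finally show ?thesis by (simp add: real_sqrt_mult)
qed

lemma eig2:
  fixes p q c s t :: real
  assumes "c \<ge> 0"
  shows "p*s^2 + q*t^2 + 2*c*\<bar>s\<bar>*\<bar>t\<bar> \<le> (p + q + sqrt ((p-q)^2 + 4*c^2))/2 * (s^2+t^2)"
proof -
  define D where "D = sqrt ((p-q)^2 + 4*c^2)"
  have DD: "D^2 = (p-q)^2 + 4*c^2" unfolding D_def by (simp add: add_nonneg_nonneg)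
  have "\<bar>p-q\<bar> \<le> D" unfolding D_def by (rule real_le_rsqrt) simp
  define X where "X = (q - p + D)/2"
  define Y where "Y = (p - q + D)/2"
  have X0: "X \<ge> 0" and Y0: "Y \<ge> 0" using \<open>\<bar>p-q\<bar> \<le> D\<close> unfolding X_def Y_def by auto
  have XY: "X * Y = c^2" unfolding X_def Y_def using DD by (simp add: algebra_simps power2_eq_square)
  have sq: "sqrt X * sqrt Y = c" using XY assms by (metis real_sqrt_mult real_sqrt_abs abs_of_nonneg)
  have "0 \<le> (sqrt X * \<bar>s\<bar> - sqrt Y * \<bar>t\<bar>)^2" by simp
  also have "\<dots> = X * s^2 + Y * t^2 - 2 * c * \<bar>s\<bar> * \<bar>t\<bar>"
    using X0 Y0 sq by (simp add: power2_diff power_mult_distrib algebra_simps)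
  finally have "2 * c * \<bar>s\<bar> * \<bar>t\<bar> \<le> X * s^2 + Y * t^2" by simp
  moreover have "(p + q + D)/2 * (s^2+t^2) = p*s^2 + q*t^2 + (X*s^2 + Y*t^2)"
    unfolding X_def Y_def by (simp add: field_simps)
  ultimately show ?thesis unfolding D_def[symmetric] by linarith
qed

lemma gram2:
  fixes X Y :: "'i \<Rightarrow> complex" and u v :: complex
  shows "(\<Sum>j\<in>J. (cmod (cnj (X j)*u + cnj (Y j)*v))^2) =
     (cmod u)^2*(\<Sum>j\<in>J. (cmod (X j))^2) + (cmod v)^2*(\<Sum>j\<in>J.(cmod (Y j))^2)
     + 2*Re(u*cnj v*(\<Sum>j\<in>J. cnj (X j)*Y j))"
proof -
  have e: "\<And>w. complex_of_real (2 * Re w) = w + cnj w" by (simp add: complex_add_cnj)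
  have e2: "\<And>w. (complex_of_real (cmod w))^2 = w * cnj w"
    by (metis complex_norm_square of_real_power)
  show ?thesis
    apply (rule of_real_eq_iff[where 'a=complex, THEN iffD1])
    apply (simp only: of_real_add of_real_sum e)
    apply (simp only: of_real_mult complex_norm_square complex_cnj_mult complex_cnj_add cnj_sum complex_cnj_cnj)
    apply (simp add: sum.distrib sum_distrib_left algebra_simps e2)
    done
qed



lemma companion_carrier: "companion n a \<in> carrier_mat n n"
  unfolding companion_def by simp

lemma companion_entry: "i < n \<Longrightarrow> l < n \<Longrightarrow> companion n a $$ (i,l) =
   (if i = 0 then - a (n - l) else if i = l + 1 then 1 else 0)"
  unfolding companion_def by simp

lemma frow1: assumes "1 \<le> j" "j \<le> n" shows "frow n a 1 j = - a j"
proof -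
  have "companion n a ^\<^sub>m 1 = companion n a"
    using companion_carrier[of n a] by simp
  then show ?thesis unfolding frow_def using assms by (simp add: companion_entry)
qed

lemma sum_rev: "(\<Sum>j=1..n. F (n - j) * z ^ (j - 1)) = (\<Sum>l\<in>{0..<n}. F l * (z::complex) ^ (n - 1 - l))"
proof -
  have "(\<Sum>j=1..n. F (n - j) * z ^ (j - 1)) = (\<Sum>l<n. F (n - Suc l) * z ^ l)"
    by (simp add: sum.atLeast1_atMost_eq)
  also have "\<dots> = (\<Sum>l<n. (\<lambda>l. F l * z ^ (n - 1 - l)) (n - Suc l))"
    by (rule sum.cong) auto
  also have "\<dots> = (\<Sum>l<n. F l * z ^ (n - 1 - l))" by (rule sum.nat_diff_reindex)
  finally show ?thesis by (simp add: lessThan_atLeast0)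
qed

lemma eigen_row:
  fixes n :: nat and a :: "nat \<Rightarrow> complex" and z :: complex
  assumes n: "n \<ge> 1" and p: "z ^ n + (\<Sum>j=1..n. a j * z ^ (j - 1)) = 0"
  shows "(\<Sum>j=1..n. frow n a k j * z ^ (j - 1)) = z ^ (n - 1 + k)"
proof -
  define C where "C = companion n a"
  define v where "v = vec n (\<lambda>i. z ^ (n - 1 - i))"
  have Cc: "C \<in> carrier_mat n n" unfolding C_def by (rule companion_carrier)
  have vc: "v \<in> carrier_vec n" unfolding v_def by simp
  have Cv: "C *\<^sub>v v = z \<cdot>\<^sub>v v"
  proof (rule eq_vecI)
    show "dim_vec (C *\<^sub>v v) = dim_vec (z \<cdot>\<^sub>v v)" using Cc vc by simp
    fix i assume "i < dim_vec (z \<cdot>\<^sub>v v)"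
    then have i: "i < n" unfolding v_def by simp
    have "(C *\<^sub>v v) $ i = (\<Sum>l\<in>{0..<n}. C $$ (i,l) * z ^ (n - 1 - l))"
      using Cc i unfolding v_def by (simp add: scalar_prod_def)
    also have "\<dots> = z * z ^ (n - 1 - i)"
    proof (cases "i = 0")
      case True
      have "(\<Sum>l\<in>{0..<n}. C $$ (i,l) * z ^ (n - 1 - l)) = (\<Sum>l\<in>{0..<n}. - a (n - l) * z ^ (n - 1 - l))"
        by (rule sum.cong) (auto simp: C_def companion_entry True)
      also have "\<dots> = - (\<Sum>j=1..n. a (n - (n - j)) * z ^ (j - 1))"
        using sum_rev[of "\<lambda>l. - a (n - l)" n z] by (simp add: sum_negf)
      also have "\<dots> = - (\<Sum>j=1..n. a j * z ^ (j - 1))"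
        by (intro arg_cong[where f=uminus] sum.cong) auto
      also have "\<dots> = z ^ n" using p by (simp add: add_eq_0_iff)
      also have "\<dots> = z * z ^ (n - 1 - i)" using n True by (simp add: power_eq_if)
      finally show ?thesis .
    next
      case False
      then obtain m where im: "i = Suc m" by (cases i) auto
      have e1: "n - 1 - (i - 1) = Suc (n - 1 - i)" using i im by linarith
      have "(\<Sum>l\<in>{0..<n}. C $$ (i,l) * z ^ (n - 1 - l)) = (\<Sum>l\<in>{0..<n}. if i - 1 = l then z ^ (n - 1 - l) else 0)"
        using i by (intro sum.cong refl) (simp add: C_def companion_entry im)
      also have "\<dots> = z ^ (n - 1 - (i - 1))" using i \<open>i \<noteq> 0\<close> by simp
      also have "\<dots> = z * z ^ (n - 1 - i)" by (simp only: e1 power_Suc)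
      finally show ?thesis .
    qed
    also have "\<dots> = (z \<cdot>\<^sub>v v) $ i" using i unfolding v_def by simp
    finally show "(C *\<^sub>v v) $ i = (z \<cdot>\<^sub>v v) $ i" .
  qed
  have pw: "(C ^\<^sub>m k) *\<^sub>v v = z ^ k \<cdot>\<^sub>v v" for k
  proof (induction k)
    case 0
    then show ?case using Cc vc by simp
  next
    case (Suc k)
    have "(C ^\<^sub>m Suc k) *\<^sub>v v = (C ^\<^sub>m k) *\<^sub>v (C *\<^sub>v v)"
      using assoc_mult_mat_vec[OF pow_carrier_mat[OF Cc, of k] Cc vc] by simp
    also have "\<dots> = z \<cdot>\<^sub>v ((C ^\<^sub>m k) *\<^sub>v v)" using Cv Cc vc
      by (simp add: mult_mat_vec[OF pow_carrier_mat[OF Cc] vc])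
    also have "\<dots> = z ^ Suc k \<cdot>\<^sub>v v" using Suc by (simp add: smult_smult_assoc)
    finally show ?case .
  qed
  have "(\<Sum>j=1..n. frow n a k j * z ^ (j - 1)) = (\<Sum>l\<in>{0..<n}. (C ^\<^sub>m k) $$ (0, l) * z ^ (n - 1 - l))"
    unfolding frow_def C_def by (rule sum_rev)
  also have "\<dots> = ((C ^\<^sub>m k) *\<^sub>v v) $ 0"
    using Cc n unfolding v_def by (simp add: scalar_prod_def)
  also have "\<dots> = z ^ k * z ^ (n - 1)" using pw n unfolding v_def by simp
  finally show ?thesis by (simp add: power_add)
qed



lemma ofreal_cmod_sq: "(complex_of_real (cmod w))^2 = w * cnj w"
  by (metis complex_norm_square of_real_power)

lemma gram_bound:
  fixes X Y :: "'i \<Rightarrow> complex" and u v :: complex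
  shows "(\<Sum>j\<in>J. (cmod (cnj (X j)*u + cnj (Y j)*v))^2) \<le>
     ((\<Sum>j\<in>J. (cmod (X j))^2) + (\<Sum>j\<in>J.(cmod (Y j))^2)
      + sqrt (((\<Sum>j\<in>J. (cmod (X j))^2) - (\<Sum>j\<in>J.(cmod (Y j))^2))^2
         + 4 * (cmod (\<Sum>j\<in>J. cnj (X j)*Y j))^2)) / 2 * ((cmod u)^2 + (cmod v)^2)"
proof -
  define G where "G = (\<Sum>j\<in>J. cnj (X j)*Y j)"
  define P where "P = (\<Sum>j\<in>J. (cmod (X j))^2)"
  define Q where "Q = (\<Sum>j\<in>J. (cmod (Y j))^2)"
  define B where "B = (P + Q + sqrt ((P - Q)^2 + 4 * (cmod G)^2)) / 2"
  have "Re (u*cnj v*G) \<le> cmod (u*cnj v*G)" by (rule complex_Re_le_cmod)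
  also have "\<dots> = cmod u * cmod v * cmod G" by (simp add: norm_mult)
  finally have r0: "Re (u*cnj v*G) \<le> cmod u * cmod v * cmod G" .
  have e0: "P * (cmod u)^2 + Q * (cmod v)^2 + 2 * cmod G * \<bar>cmod u\<bar> * \<bar>cmod v\<bar>
     \<le> B * ((cmod u)^2 + (cmod v)^2)"
    unfolding B_def by (rule eig2) simp
  have eq: "P * (cmod u)^2 + Q * (cmod v)^2 + 2 * cmod G * \<bar>cmod u\<bar> * \<bar>cmod v\<bar>
     = (cmod u)^2 * P + (cmod v)^2 * Q + 2 * (cmod u * cmod v * cmod G)"
    by (simp add: algebra_simps)
  show ?thesis unfolding gram2 G_def[symmetric] P_def[symmetric] Q_def[symmetric] B_def[symmetric]
    using r0 e0 eq by linarith
qed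

lemma eigval_ge:
  fixes p q e :: real
  assumes "0 \<le> e"
  shows "max p q \<le> (p + q + sqrt ((p-q)^2 + e))/2"
proof -
  define S where "S = sqrt ((p-q)^2 + e)"
  have "\<bar>p-q\<bar> \<le> S" unfolding S_def by (rule real_le_rsqrt) (simp add: assms)
  then show ?thesis unfolding S_def[symmetric] by (auto simp: max_def abs_le_iff)
qed

lemma norm_add_sq: "(cmod (x + y))^2 = (cmod x)^2 + 2 * Re (x * cnj y) + (cmod y)^2"
proof -
  have e: "\<And>w. complex_of_real (2 * Re w) = w + cnj w" by (simp add: complex_add_cnj)
  have "complex_of_real ((cmod (x + y))^2) = complex_of_real ((cmod x)^2 + 2 * Re (x * cnj y) + (cmod y)^2)"
    apply (simp only: of_real_add e)
    apply (simp only: of_real_mult complex_norm_square complex_cnj_mult complex_cnj_add complex_cnj_cnj)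
    apply (simp add: algebra_simps)
    done
  then show ?thesis by (simp only: of_real_eq_iff)
qed

lemma absorb:
  fixes N W S L :: real
  assumes "0 \<le> N" "0 \<le> W" "0 \<le> L" "N \<le> sqrt W * sqrt S" "S \<le> L * N"
  shows "N \<le> L * W"
proof (cases "N = 0")
  case True then show ?thesis using assms by simp
next
  case False
  then have Np: "N > 0" using assms by simp
  have S0: "0 \<le> S"
  proof (rule ccontr)
    assume "\<not> 0 \<le> S"
    then have "sqrt S \<le> 0" by simp
    then have "sqrt W * sqrt S \<le> 0" using assms(2) by (simp add: mult_nonneg_nonpos)
    then show False using assms(4) Np by linarith
  qed
  have "N^2 \<le> (sqrt W * sqrt S)^2" using assms by (intro power_mono) auto
  also have "\<dots> = W * S" using assms S0 by (simp add: power_mult_distrib)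
  also have "\<dots> \<le> W * (L * N)" using assms by (intro mult_left_mono) auto
  finally have "N * N \<le> (L * W) * N" by (simp add: power2_eq_square algebra_simps)
  then show ?thesis using Np by simp
qed

lemma cs2:
  fixes a b c d :: real
  shows "a * b + c * d \<le> sqrt (a^2 + c^2) * sqrt (b^2 + d^2)"
proof -
  have "(a^2 + c^2) * (b^2 + d^2) - (a*b + c*d)^2 = (a*d - c*b)^2"
    by (simp add: power2_eq_square algebra_simps)
  then have "(a*b + c*d)^2 \<le> (a^2 + c^2) * (b^2 + d^2)"
    by (metis diff_ge_0_iff_ge zero_le_power2)
  then have "a*b + c*d \<le> sqrt ((a^2 + c^2) * (b^2 + d^2))" by (rule real_le_rsqrt)
  then show ?thesis by (simp add: real_sqrt_mult)
qed

lemma pw_sh: "(x::real)^k * x^n = x^(n+k)"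
  by (simp add: power_add mult.commute)

lemma geo2:
  fixes x :: real
  assumes "2 \<le> n"
  shows "x^2 * (\<Sum>j=1..n. x^(j-1)) = x^n + x^(n+1) + (\<Sum>j=3..n. x^(j-1))"
  using assms
proof (induction n rule: nat_induct_at_least)
  case base
  then show ?case by (simp add: numeral_2_eq_2 numeral_3_eq_3 power2_eq_square algebra_simps)
next
  case (Suc n)
  have s1: "(\<Sum>j=1..Suc n. x^(j-1)) = (\<Sum>j=1..n. x^(j-1)) + x^n" by simp
  have s2: "(\<Sum>j=3..Suc n. x^(j-1)) = (\<Sum>j=3..n. x^(j-1)) + x^n"
    using Suc.hyps by (simp add: numeral_3_eq_3)
  have m: "x^2*((\<Sum>j=1..n. x^(j-1)) + x^n) = x^2*(\<Sum>j=1..n. x^(j-1)) + x^(n+2)"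
    by (simp only: distrib_left pw_sh)
  have "x^(Suc n) = x^(n+1)" by simp
  moreover have "x^(Suc n+1) = x^(n+2)" by (rule arg_cong[where f="(^) x"]) simp
  ultimately show ?case unfolding s1 s2 m using Suc.IH by linarith
qed

lemma geo4:
  fixes x :: real
  assumes "0 \<le> x"
  shows "x^4 * (\<Sum>j=1..n. x^(j-1)) \<le> (\<Sum>j=1..n. x^(j-1)) + x^n + x^(n+1) + x^(n+2) + x^(n+3)"
proof (induction n)
  case 0
  then show ?case using assms by simp
next
  case (Suc n)
  have s1: "(\<Sum>j=1..Suc n. x^(j-1)) = (\<Sum>j=1..n. x^(j-1)) + x^n" by simp
  have m: "x^4*((\<Sum>j=1..n. x^(j-1)) + x^n) = x^4*(\<Sum>j=1..n. x^(j-1)) + x^(n+4)"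
    by (simp only: distrib_left pw_sh)
  have "x^(Suc n) = x^(n+1)" by simp
  moreover have "x^(Suc n+1) = x^(n+2)" by (rule arg_cong[where f="(^) x"]) simp
  moreover have "x^(Suc n+2) = x^(n+3)" by (rule arg_cong[where f="(^) x"]) simp
  moreover have "x^(Suc n+3) = x^(n+4)" by (rule arg_cong[where f="(^) x"]) simp
  ultimately show ?case unfolding s1 m using Suc.IH by linarith
qed



theorem mainTheorem15:
  fixes n :: nat and a :: "nat \<Rightarrow> complex" and z :: complex
  assumes "n \<ge> 2" and "a 1 \<noteq> 0"
    and "z ^ n + (\<Sum>j=1..n. a j * z ^ (j - 1)) = 0"
  shows "cmod z \<le> sqrt (
      (1/2) * sqrt ((delta n a + 1 + sqrt ((delta n a - 1)^2 + 4 * delta' n a)) / 2)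
    + (1/2) * root 4 ((delta1 n a + delta n a
          + sqrt ((delta1 n a - delta n a)^2 + 4 * delta2 n a)) / 2 + 1))"
proof -
  have n1: "n \<ge> 1" using assms(1) by simp
  define r where "r = cmod z"
  define w where "w = (\<lambda>j::nat. z ^ (j - 1))"
  define T where "T = (\<lambda>k. \<Sum>j=1..n. frow n a k j * w j)"
  have Tv: "T k = z ^ (n - 1 + k)" for k
    unfolding T_def w_def using eigen_row[OF n1 assms(3)] by simp
  have Tn: "(cmod (T k))^2 = (r^2)^(n - 1 + k)" for k
    unfolding Tv r_def by (simp add: norm_power power_mult[symmetric] mult.commute)
  define A where "A = (\<lambda>j. frow n a 1 j)"
  define B where "B = bco n a"
  define Cc where "Cc = cco n a"
  define D where "D = dco n a"
  have TA: "T 1 = (\<Sum>j=1..n. A j * w j)" unfolding T_def A_def by simp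
  have TB: "T 2 = (\<Sum>j=1..n. B j * w j)" unfolding T_def B_def bco_def by simp
  have TC: "T 3 = (\<Sum>j=1..n. Cc j * w j)" unfolding T_def Cc_def cco_def by simp
  have TD: "T 4 = (\<Sum>j=1..n. D j * w j)" unfolding T_def D_def dco_def by simp
  have Aa: "j \<in> {1..n} \<Longrightarrow> A j = - a j" for j unfolding A_def by (rule frow1) auto
  define W where "W = (\<Sum>j=1..n. (cmod (w j))^2)"
  define W2 where "W2 = (\<Sum>j=3..n. (cmod (w j))^2)"
  have wn: "(cmod (w j))^2 = (r^2)^(j - 1)" for j
    unfolding w_def r_def by (simp add: norm_power power_mult[symmetric] mult.commute)
  have W_eq: "W = (\<Sum>j=1..n. (r^2)^(j-1))" unfolding W_def wn ..
  have W2_eq: "W2 = (\<Sum>j=3..n. (r^2)^(j-1))" unfolding W2_def wn ..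
  have Wpos: "W > 0"
  proof -
    have "(cmod (w 1))^2 \<le> W" unfolding W_def
      by (rule member_le_sum) (use n1 in auto)
    moreover have "(cmod (w 1))^2 = 1" unfolding w_def by simp
    ultimately show ?thesis by simp
  qed
  have W20: "W2 \<ge> 0" unfolding W2_def by (simp add: sum_nonneg)
  have alphaA: "alpha n a = (\<Sum>j=1..n. (cmod (A j))^2)"
    unfolding alpha_def by (rule sum.cong) (simp_all add: Aa)
  have betaB: "beta n a = (\<Sum>j=1..n. (cmod (B j))^2)" unfolding beta_def B_def ..
  have gammaG: "gamma n a = (\<Sum>j=1..n. cnj (A j) * B j)"
    unfolding gamma_def B_def by (simp add: Aa sum_negf[symmetric] mult.commute)
  have alpha'A: "alpha' n a = (\<Sum>j=3..n. (cmod (A j))^2)"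
    unfolding alpha'_def by (rule sum.cong) (simp_all add: Aa)
  have beta'B: "beta' n a = (\<Sum>j=3..n. (cmod (B j))^2)" unfolding beta'_def B_def ..
  have gamma'G: "gamma' n a = (\<Sum>j=3..n. cnj (A j) * B j)"
    unfolding gamma'_def B_def by (simp add: Aa sum_negf[symmetric])
  \<comment> \<open>Part 1: the square of the companion matrix\<close>
  define P where "P = (cmod (T 1))^2 + (cmod (T 2))^2"
  define q where "q = (\<lambda>j. cnj (A j) * T 1 + cnj (B j) * T 2)"
  define pv where "pv = (\<lambda>j. q j + (if 3 \<le> j then w j else 0))"
  define S where "S = (\<Sum>j=1..n. (cmod (pv j))^2)"
  define dl where "dl = delta n a"
  define dl' where "dl' = delta' n a"
  define lam where "lam = (dl + 1 + sqrt ((dl - 1)^2 + 4 * dl')) / 2"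
  have filt: "(\<Sum>j=1..n. if 3 \<le> j then f j else 0) = (\<Sum>j=3..n. f j)" for f :: "nat \<Rightarrow> 'x::comm_monoid_add"
  proof -
    have "{j \<in> {1..n}. 3 \<le> j} = {3..n}" by auto
    then show ?thesis using sum.inter_filter[of "{1..n}" f "\<lambda>j. 3 \<le> j"] by simp
  qed
  have wcw: "w j * cnj (w j) = complex_of_real ((cmod (w j))^2)" for j
    by (rule complex_norm_square[symmetric])
  have i1: "(\<Sum>j=1..n. w j * cnj (q j)) = cnj (T 1) * (\<Sum>j=1..n. A j * w j) + cnj (T 2) * (\<Sum>j=1..n. B j * w j)"
    unfolding q_def by (simp add: sum.distrib sum_distrib_left algebra_simps)
  have i2: "(\<Sum>j=1..n. w j * cnj (pv j)) = complex_of_real (P + W2)"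
  proof -
    have "(\<Sum>j=1..n. w j * cnj (pv j)) = (\<Sum>j=1..n. w j * cnj (q j)) + (\<Sum>j=1..n. if 3 \<le> j then w j * cnj (w j) else 0)"
      unfolding pv_def sum.distrib[symmetric] by (rule sum.cong) (auto simp: distrib_left)
    also have "\<dots> = T 1 * cnj (T 1) + T 2 * cnj (T 2) + (\<Sum>j=3..n. complex_of_real ((cmod (w j))^2))"
      unfolding i1 filt wcw TA[symmetric] TB[symmetric] by (simp add: mult.commute)
    also have "\<dots> = complex_of_real (P + W2)"
      unfolding P_def W2_def by (simp add: ofreal_cmod_sq)
    finally show ?thesis .
  qed
  have ii: "P + W2 \<le> sqrt W * sqrt S"
  proof -
    have "P + W2 = Re (\<Sum>j=1..n. w j * cnj (pv j))" unfolding i2 by simp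
    also have "\<dots> \<le> cmod (\<Sum>j=1..n. w j * cnj (pv j))" by (rule complex_Re_le_cmod)
    also have "\<dots> \<le> sqrt W * sqrt S" unfolding W_def S_def by (rule complex_CS)
    finally show ?thesis .
  qed
  have iii: "S = (\<Sum>j=1..n. (cmod (q j))^2) + 2 * Re (\<Sum>j=3..n. q j * cnj (w j)) + W2"
  proof -
    have "S = (\<Sum>j=1..n. (cmod (q j))^2 + (if 3 \<le> j then 2 * Re (q j * cnj (w j)) + (cmod (w j))^2 else 0))"
      unfolding S_def pv_def by (rule sum.cong) (auto simp: norm_add_sq)
    also have "\<dots> = (\<Sum>j=1..n. (cmod (q j))^2) + (\<Sum>j=3..n. 2 * Re (q j * cnj (w j)) + (cmod (w j))^2)"
      by (simp only: sum.distrib filt)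
    also have "\<dots> = (\<Sum>j=1..n. (cmod (q j))^2) + 2 * Re (\<Sum>j=3..n. q j * cnj (w j)) + W2"
      unfolding W2_def by (simp add: sum.distrib sum_distrib_left)
    finally show ?thesis .
  qed
  have dl'0: "dl' \<ge> 0"
  proof -
    have "max (alpha' n a) (beta' n a) \<le> dl'" unfolding dl'_def delta'_def
      by (rule eigval_ge) simp
    moreover have "alpha' n a \<ge> 0" unfolding alpha'_def by (simp add: sum_nonneg)
    ultimately show ?thesis by simp
  qed
  have dl0: "dl \<ge> 0"
  proof -
    have "max (alpha n a) (beta n a) \<le> dl" unfolding dl_def delta_def
      by (rule eigval_ge) simp
    moreover have "alpha n a \<ge> 0" unfolding alpha_def by (simp add: sum_nonneg)
    ultimately show ?thesis by simp
  qed
  have lam0: "lam \<ge> 0"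
  proof -
    have "max dl 1 \<le> lam" unfolding lam_def by (rule eigval_ge) (use dl'0 in simp)
    then show ?thesis by simp
  qed
  have iv: "(\<Sum>j=1..n. (cmod (q j))^2) \<le> dl * P"
    using gram_bound[of A "T 1" B "T 2" "{1..n}"]
    unfolding q_def P_def dl_def delta_def alphaA[symmetric] betaB[symmetric] gammaG[symmetric]
    by (simp add: mult.commute)
  have v: "Re (\<Sum>j=3..n. q j * cnj (w j)) \<le> sqrt (dl' * P) * sqrt W2"
  proof -
    have "Re (\<Sum>j=3..n. q j * cnj (w j)) \<le> cmod (\<Sum>j=3..n. q j * cnj (w j))" by (rule complex_Re_le_cmod)
    also have "\<dots> \<le> sqrt (\<Sum>j=3..n. (cmod (q j))^2) * sqrt W2" unfolding W2_def by (rule complex_CS)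
    also have "\<dots> \<le> sqrt (dl' * P) * sqrt W2"
    proof (intro mult_right_mono real_sqrt_le_mono)
      show "(\<Sum>j=3..n. (cmod (q j))^2) \<le> dl' * P"
        using gram_bound[of A "T 1" B "T 2" "{3..n}"]
        unfolding q_def P_def dl'_def delta'_def alpha'A[symmetric] beta'B[symmetric] gamma'G[symmetric]
        by (simp add: mult.commute)
    qed (use W20 in simp)
    finally show ?thesis .
  qed
  have vi: "S \<le> lam * (P + W2)"
  proof -
    have P0: "P \<ge> 0" unfolding P_def by simp
    have e: "dl * (sqrt P)^2 + 1 * (sqrt W2)^2 + 2 * sqrt dl' * \<bar>sqrt P\<bar> * \<bar>sqrt W2\<bar>
       \<le> (dl + 1 + sqrt ((dl - 1)^2 + 4 * (sqrt dl')^2)) / 2 * ((sqrt P)^2 + (sqrt W2)^2)"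
      by (rule eig2) (use dl'0 in simp)
    have "S \<le> dl * P + 2 * (sqrt (dl' * P) * sqrt W2) + W2" using iii iv v by linarith
    also have "\<dots> \<le> lam * (P + W2)" using e P0 W20 dl'0 unfolding lam_def
      by (simp add: real_sqrt_mult mult.assoc)
    finally show ?thesis .
  qed
  have vii: "P + W2 \<le> lam * W"
    by (rule absorb[OF _ _ lam0 ii vi]) (use W20 Wpos in \<open>auto simp: P_def\<close>)
  have viii: "(r^2)^2 * W = P + W2"
    using geo2[OF assms(1), of "r^2"] unfolding W_eq[symmetric] W2_eq[symmetric] P_def Tn
    using n1 by simp
  have part1: "r^2 \<le> sqrt lam"
  proof (rule real_le_rsqrt)
    have "(r^2)^2 * W \<le> lam * W" using vii viii by simp
    then show "(r^2)^2 \<le> lam" using Wpos by simp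
  qed
  \<comment> \<open>Part 2: the fourth power of the companion matrix\<close>
  define P43 where "P43 = (cmod (T 4))^2 + (cmod (T 3))^2"
  define u where "u = (\<lambda>j. cnj (D j) * T 4 + cnj (Cc j) * T 3)"
  define pv4 where "pv4 = (\<lambda>j. u j + q j)"
  define S4 where "S4 = (\<Sum>j=1..n. (cmod (pv4 j))^2)"
  define dl1 where "dl1 = delta1 n a"
  define dl2 where "dl2 = delta2 n a"
  define mu where "mu = (dl1 + dl + sqrt ((dl1 - dl)^2 + 4 * dl2)) / 2"
  have j1: "(\<Sum>j=1..n. w j * cnj (u j)) = cnj (T 4) * (\<Sum>j=1..n. D j * w j) + cnj (T 3) * (\<Sum>j=1..n. Cc j * w j)"
    unfolding u_def by (simp add: sum.distrib sum_distrib_left algebra_simps)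
  have j2: "(\<Sum>j=1..n. w j * cnj (pv4 j)) = complex_of_real (P43 + P)"
  proof -
    have "(\<Sum>j=1..n. w j * cnj (pv4 j)) = (\<Sum>j=1..n. w j * cnj (u j)) + (\<Sum>j=1..n. w j * cnj (q j))"
      unfolding pv4_def sum.distrib[symmetric] by (rule sum.cong) (auto simp: distrib_left)
    also have "\<dots> = T 4 * cnj (T 4) + T 3 * cnj (T 3) + (T 1 * cnj (T 1) + T 2 * cnj (T 2))"
      unfolding i1 j1 TA[symmetric] TB[symmetric] TC[symmetric] TD[symmetric] by (simp add: mult.commute)
    also have "\<dots> = complex_of_real (P43 + P)"
      unfolding P_def P43_def by (simp add: ofreal_cmod_sq)
    finally show ?thesis .
  qed
  have jj: "P43 + P \<le> sqrt W * sqrt S4"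
  proof -
    have "P43 + P = Re (\<Sum>j=1..n. w j * cnj (pv4 j))" unfolding j2 by simp
    also have "\<dots> \<le> cmod (\<Sum>j=1..n. w j * cnj (pv4 j))" by (rule complex_Re_le_cmod)
    also have "\<dots> \<le> sqrt W * sqrt S4" unfolding W_def S4_def by (rule complex_CS)
    finally show ?thesis .
  qed
  have jjj: "S4 = (\<Sum>j=1..n. (cmod (u j))^2) + 2 * Re (\<Sum>j=1..n. u j * cnj (q j)) + (\<Sum>j=1..n. (cmod (q j))^2)"
    unfolding S4_def pv4_def norm_add_sq by (simp add: sum.distrib sum_distrib_left)
  have dl20: "dl2 \<ge> 0"
  proof -
    define g2 where "g2 = gamma2 n a"
    define g3 where "g3 = gamma3 n a"
    define g4 where "g4 = gamma4 n a"
    define g5 where "g5 = gamma5 n a"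
    have "max ((cmod g2)^2 + (cmod g3)^2) ((cmod g4)^2 + (cmod g5)^2) \<le> dl2"
      unfolding dl2_def delta2_def Let_def g2_def[symmetric] g3_def[symmetric] g4_def[symmetric] g5_def[symmetric]
      by (rule eigval_ge) simp
    moreover have "(cmod g2)^2 + (cmod g3)^2 \<ge> 0" by simp
    ultimately show ?thesis by (meson max.cobounded1 order_trans)
  qed
  have mu0: "mu \<ge> 0"
  proof -
    have "max dl1 dl \<le> mu" unfolding mu_def by (rule eigval_ge) (use dl20 in simp)
    then show ?thesis using dl0 by simp
  qed
  have jv: "(\<Sum>j=1..n. (cmod (u j))^2) \<le> dl1 * P43"
  proof -
    have g1: "cmod (\<Sum>j=1..n. cnj (D j) * Cc j) = cmod (gamma1 n a)"
    proof -
      have "(\<Sum>j=1..n. cnj (D j) * Cc j) = cnj (gamma1 n a)"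
        unfolding gamma1_def D_def Cc_def by (simp add: mult.commute)
      then show ?thesis by simp
    qed
    show ?thesis
      using gram_bound[of D "T 4" Cc "T 3" "{1..n}"]
      unfolding u_def P43_def dl1_def delta1_def g1 alpha1_def beta1_def D_def[symmetric] Cc_def[symmetric]
      by (simp add: mult.commute)
  qed
  define sDA where "sDA = (\<Sum>j=1..n. cnj (D j) * A j)"
  define sDB where "sDB = (\<Sum>j=1..n. cnj (D j) * B j)"
  define sCA where "sCA = (\<Sum>j=1..n. cnj (Cc j) * A j)"
  define sCB where "sCB = (\<Sum>j=1..n. cnj (Cc j) * B j)"
  define m1 where "m1 = T 4 * sDB + T 3 * sCB"
  define m2 where "m2 = T 4 * sDA + T 3 * sCA"
  have cross: "(\<Sum>j=1..n. u j * cnj (q j)) = cnj (T 1) * m2 + cnj (T 2) * m1"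
    unfolding u_def q_def m1_def m2_def sDA_def sDB_def sCA_def sCB_def
    by (simp add: sum.distrib sum_distrib_left algebra_simps)
  have eDB: "sDB = cnj (gamma2 n a)" unfolding sDB_def gamma2_def D_def B_def by (simp add: mult.commute)
  have eCB: "sCB = cnj (gamma4 n a)" unfolding sCB_def gamma4_def Cc_def B_def by (simp add: mult.commute)
  have eDA: "sDA = - cnj (gamma3 n a)"
    unfolding sDA_def gamma3_def D_def by (simp add: Aa sum_negf[symmetric] mult.commute)
  have eCA: "sCA = - cnj (gamma5 n a)"
    unfolding sCA_def gamma5_def Cc_def by (simp add: Aa sum_negf[symmetric] mult.commute)
  have mbound: "(cmod m2)^2 + (cmod m1)^2 \<le> dl2 * P43"
  proof -
    define X where "X = (\<lambda>i::nat. if i = 0 then cnj sDA else cnj sDB)"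
    define Y where "Y = (\<lambda>i::nat. if i = 0 then cnj sCA else cnj sCB)"
    have hb: "(\<Sum>i\<in>{0::nat,1}. (cmod (cnj (X i)*T 4 + cnj (Y i)*T 3))^2) \<le>
     ((\<Sum>i\<in>{0::nat,1}. (cmod (X i))^2) + (\<Sum>i\<in>{0::nat,1}.(cmod (Y i))^2)
      + sqrt (((\<Sum>i\<in>{0::nat,1}. (cmod (X i))^2) - (\<Sum>i\<in>{0::nat,1}.(cmod (Y i))^2))^2
         + 4 * (cmod (\<Sum>i\<in>{0::nat,1}. cnj (X i)*Y i))^2)) / 2 * ((cmod (T 4))^2 + (cmod (T 3))^2)"
      by (rule gram_bound)
    have h1: "(\<Sum>i\<in>{0::nat,1}. (cmod (cnj (X i)*T 4 + cnj (Y i)*T 3))^2) = (cmod m2)^2 + (cmod m1)^2"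
      unfolding X_def Y_def m1_def m2_def by (simp add: mult.commute)
    have h2: "(\<Sum>i\<in>{0::nat,1}. (cmod (X i))^2) = (cmod (gamma2 n a))^2 + (cmod (gamma3 n a))^2"
      unfolding X_def by (simp add: eDA eDB)
    have h3: "(\<Sum>i\<in>{0::nat,1}. (cmod (Y i))^2) = (cmod (gamma4 n a))^2 + (cmod (gamma5 n a))^2"
      unfolding Y_def by (simp add: eCA eCB)
    have h4: "cmod (\<Sum>i\<in>{0::nat,1}. cnj (X i)*Y i) = cmod (gamma2 n a * cnj (gamma4 n a) + gamma3 n a * cnj (gamma5 n a))"
    proof -
      have "(\<Sum>i\<in>{0::nat,1}. cnj (X i)*Y i) = cnj (gamma2 n a * cnj (gamma4 n a) + gamma3 n a * cnj (gamma5 n a))"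
        unfolding X_def Y_def by (simp add: eDA eDB eCA eCB)
      then show ?thesis by (metis complex_mod_cnj)
    qed
    show ?thesis using hb unfolding h1 h2 h3 h4 dl2_def delta2_def Let_def P43_def by simp
  qed
  have jv2: "Re (\<Sum>j=1..n. u j * cnj (q j)) \<le> sqrt P * sqrt (dl2 * P43)"
  proof -
    have "Re (\<Sum>j=1..n. u j * cnj (q j)) \<le> cmod (\<Sum>j=1..n. u j * cnj (q j))" by (rule complex_Re_le_cmod)
    also have "\<dots> \<le> cmod (T 1) * cmod m2 + cmod (T 2) * cmod m1"
      unfolding cross by (rule order_trans[OF norm_triangle_ineq]) (simp add: norm_mult)
    also have "\<dots> \<le> sqrt P * sqrt ((cmod m2)^2 + (cmod m1)^2)" unfolding P_def by (rule cs2)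
    also have "\<dots> \<le> sqrt P * sqrt (dl2 * P43)"
      by (intro mult_left_mono real_sqrt_le_mono mbound) (simp add: P_def)
    finally show ?thesis .
  qed
  have jvi: "S4 \<le> mu * (P43 + P)"
  proof -
    have P0: "P \<ge> 0" unfolding P_def by simp
    have P430: "P43 \<ge> 0" unfolding P43_def by simp
    have e: "dl1 * (sqrt P43)^2 + dl * (sqrt P)^2 + 2 * sqrt dl2 * \<bar>sqrt P43\<bar> * \<bar>sqrt P\<bar>
       \<le> (dl1 + dl + sqrt ((dl1 - dl)^2 + 4 * (sqrt dl2)^2)) / 2 * ((sqrt P43)^2 + (sqrt P)^2)"
      by (rule eig2) (use dl20 in simp)
    have "S4 \<le> dl1 * P43 + 2 * (sqrt P * sqrt (dl2 * P43)) + dl * P" using jjj jv jv2 iv by linarith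
    also have "\<dots> \<le> mu * (P43 + P)" using e P0 P430 dl20 unfolding mu_def
      by (simp add: real_sqrt_mult algebra_simps)
    finally show ?thesis .
  qed
  have jvii: "P43 + P \<le> mu * W"
    by (rule absorb[OF _ _ mu0 jj jvi]) (use Wpos in \<open>auto simp: P_def P43_def\<close>)
  have jviii: "(r^2)^4 * W \<le> W + P + P43"
    using geo4[of "r^2" n] unfolding W_eq[symmetric] P_def P43_def Tn
    using n1 by (simp add: algebra_simps)
  have part2: "r^2 \<le> root 4 (mu + 1)"
  proof -
    have "(r^2)^4 * W \<le> (mu + 1) * W" using jvii jviii by (simp add: algebra_simps)
    then have "(r^2)^4 \<le> mu + 1" using Wpos by simp
    then have "root 4 ((r^2)^4) \<le> root 4 (mu + 1)" by (intro real_root_le_mono) auto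
    moreover have "root 4 ((r^2)^4) = r^2" by (rule real_root_pos2) auto
    ultimately show ?thesis by linarith
  qed
  have "r^2 \<le> (1/2) * sqrt lam + (1/2) * root 4 (mu + 1)" using part1 part2 by linarith
  then have "r \<le> sqrt ((1/2) * sqrt lam + (1/2) * root 4 (mu + 1))" by (rule real_le_rsqrt)
  then show ?thesis unfolding r_def lam_def mu_def dl_def dl'_def dl1_def dl2_def .
qed

end
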